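(* Let $\eta>0$ and let $V\subseteq\mathbb R^n$ be an $\eta$-bounded $C^1$-submanifold of dimension $p$. Let $x\in V$ and $\epsilon>0$ be such that $\big(B(x_{\le p},\epsilon)\times B(x_{>p},p\eta\epsilon)\big)\cap\operatorname{fr}V=\emptyset$. Then the connected component of $V\cap\big(B(x_{\le p},\epsilon)\times B(x_{>p},p\eta\epsilon)\big)$ containing $x$ is the graph of a $p\eta$-Lipschitz function $g:B(x_{\le p},\epsilon)\to B(x_{>p},p\eta\epsilon)$.
   Context: For $x\in\mathbb R^k$, $|x|=\max_i|x_i|$ and $B(x,r)=\{y:|y-x|<r\}$; Lipschitz constants are with respect to this norm. For $x\in\mathbb R^n$, $x_{\le p}=(x_1,\dots,x_p)$ and $x_{>p}=(x_{p+1},\dots,x_n)$. A $p$-dimensional submanifold $V\subseteq\mathbb R^n$ is $\eta$-bounded if for every $x\in V$ there is a real $(n-p)\times p$ matrix $L$ with all entries of absolute value $\le\eta$ such that $T_xV=\{(u,Lu):u\in\mathbb R^p\}$. $\operatorname{fr}V=\operatorname{cl}V\setminus V$. *)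

theory Defs
  imports "HOL-Analysis.Analysis"
begin

text \<open>R^n is modelled as R^p x R^q (n = p + q), with a point x written (x_{\<le>p}, x_{>p}).
  All norms are the max norm infnorm.\<close>

definition sball :: "real ^ 'k \<Rightarrow> real \<Rightarrow> (real ^ 'k) set" where
  "sball c r = {y. infnorm (y - c) < r}"

definition sup_lipschitz_on :: "real \<Rightarrow> (real ^ 'p) set \<Rightarrow> (real ^ 'p \<Rightarrow> real ^ 'q) \<Rightarrow> bool" where
  "sup_lipschitz_on L S g \<longleftrightarrow> (\<forall>a\<in>S. \<forall>b\<in>S. infnorm (g a - g b) \<le> L * infnorm (a - b))"

definition c1_submanifold :: "((real ^ 'p) \<times> (real ^ 'q)) set \<Rightarrow> bool" where
  "c1_submanifold V \<longleftrightarrow>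
    (\<forall>x\<in>V. \<exists>U W (\<phi> :: real ^ 'p \<Rightarrow> (real ^ 'p) \<times> (real ^ 'q)) \<psi> \<phi>'.
        open U \<and> x \<in> U \<and> open W \<and>
        (\<forall>w\<in>W. (\<phi> has_derivative blinfun_apply (\<phi>' w)) (at w)) \<and>
        continuous_on W \<phi>' \<and>
        (\<forall>w\<in>W. inj (blinfun_apply (\<phi>' w))) \<and>
        homeomorphism W (V \<inter> U) \<phi> \<psi>)"

definition tangent_space :: "((real ^ 'p) \<times> (real ^ 'q)) set \<Rightarrow> (real ^ 'p) \<times> (real ^ 'q) \<Rightarrow> ((real ^ 'p) \<times> (real ^ 'q)) set" where
  "tangent_space V x = {v. \<exists>\<gamma> \<delta>. \<delta> > 0 \<and> \<gamma> ` {-\<delta><..<\<delta>} \<subseteq> V \<and> \<gamma> 0 = x \<and>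
       (\<gamma> has_vector_derivative v) (at 0)}"

definition eta_bounded :: "real \<Rightarrow> ((real ^ 'p) \<times> (real ^ 'q)) set \<Rightarrow> bool" where
  "eta_bounded \<eta> V \<longleftrightarrow> (\<forall>x\<in>V. \<exists>L :: real ^ 'p ^ 'q.
      (\<forall>i j. \<bar>L $ i $ j\<bar> \<le> \<eta>) \<and> tangent_space V x = {(u, L *v u) | u. True})"

definition frontier_set :: "'a::topological_space set \<Rightarrow> 'a set" where
  "frontier_set V = closure V - V"

end

theory Submission
  imports Defs
begin

lemma infnorm_le_cart:
  fixes x :: "real ^ 'n"
  assumes "\<And>i. \<bar>x $ i\<bar> \<le> M"
  shows "infnorm x \<le> M"
  unfolding infnorm_cart
  by (rule cSup_least) (use assms in auto)

lemma matvec_infnorm_bound: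
  fixes L :: "real ^ 'p ^ 'q"
  assumes "\<And>i j. \<bar>L $ i $ j\<bar> \<le> \<eta>"
  shows "infnorm (L *v u) \<le> real CARD('p) * \<eta> * infnorm u"
proof (rule infnorm_le_cart)
  fix i
  have "\<bar>(L *v u) $ i\<bar> = \<bar>\<Sum>j\<in>UNIV. L $ i $ j * u $ j\<bar>"
    by (simp add: matrix_vector_mult_def)
  also have "\<dots> \<le> (\<Sum>j\<in>UNIV. \<bar>L $ i $ j * u $ j\<bar>)"
    by (rule sum_abs)
  also have "\<dots> \<le> (\<Sum>j\<in>(UNIV::'p set). \<eta> * infnorm u)"
  proof (rule sum_mono)
    fix j
    show "\<bar>L $ i $ j * u $ j\<bar> \<le> \<eta> * infnorm u"
      unfolding abs_mult
      by (rule mult_mono) (use assms component_le_infnorm_cart[of u j] abs_ge_zero order_trans in blast)+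
  qed
  also have "\<dots> = real CARD('p) * \<eta> * infnorm u" by simp
  finally show "\<bar>(L *v u) $ i\<bar> \<le> real CARD('p) * \<eta> * infnorm u" .
qed

lemma lip_from_deriv:
  fixes h :: "real ^ 'p \<Rightarrow> real ^ 'q"
  assumes der: "\<And>u. u \<in> N \<Longrightarrow> (h has_derivative D u) (at u)"
    and bnd: "\<And>u e. u \<in> N \<Longrightarrow> infnorm (D u e) \<le> M * infnorm e"
    and seg: "closed_segment a b \<subseteq> N"
  shows "infnorm (h a - h b) \<le> M * infnorm (a - b)"
proof -
  let ?l = "\<lambda>t::real. a + t *\<^sub>R (b - a)"
  have lin: "?l t \<in> N" if "t \<in> {0..1}" for t
  proof -
    have "?l t = (1 - t) *\<^sub>R a + t *\<^sub>R b" by (simp add: algebra_simps)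
    then show ?thesis using seg that unfolding closed_segment_def by auto
  qed
  have comp: "\<bar>(h b - h a) $ j\<bar> \<le> M * infnorm (a - b)" for j
  proof -
    let ?F = "\<lambda>t. h (?l t) $ j"
    have dl: "(?l has_derivative (\<lambda>s. s *\<^sub>R (b - a))) (at t)" for t
      by (auto intro!: derivative_eq_intros)
    have dF: "(?F has_derivative (\<lambda>s. D (?l t) (s *\<^sub>R (b - a)) $ j)) (at t)" if "t \<in> {0..1}" for t
    proof -
      have "((\<lambda>t. h (?l t)) has_derivative (\<lambda>s. D (?l t) (s *\<^sub>R (b - a)))) (at t)"
        using has_derivative_compose[OF dl der[OF lin[OF that]]] .
      then show ?thesis
        using bounded_linear.has_derivative[OF bounded_linear_vec_nth[of j]] by blast
    qed
    have cont: "continuous_on {0..1} ?F"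
      using dF has_derivative_continuous continuous_at_imp_continuous_on by blast
    obtain t where t: "t \<in> {0<..<1}" and le: "norm (?F 1 - ?F 0) \<le> norm (D (?l t) ((1 - 0) *\<^sub>R (b - a)) $ j)"
      using mvt_general[of 0 1 ?F "\<lambda>t s. D (?l t) (s *\<^sub>R (b - a)) $ j"] dF cont by force
    have "\<bar>D (?l t) (b - a) $ j\<bar> \<le> infnorm (D (?l t) (b - a))"
      by (rule component_le_infnorm_cart)
    also have "\<dots> \<le> M * infnorm (b - a)" using bnd lin t by auto
    finally show ?thesis using le by (simp add: infnorm_sub)
  qed
  have "infnorm (h b - h a) \<le> M * infnorm (a - b)"
    by (rule infnorm_le_cart) (rule comp)
  then show ?thesis by (simp add: infnorm_sub)
qed

lemma local_graph:
  fixes V :: "((real ^ 'p) \<times> (real ^ 'q)) set"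
  assumes man: "c1_submanifold V" and eb: "eta_bounded \<eta> V" and yV: "y \<in> V"
  shows "\<exists>Ob N h. open Ob \<and> y \<in> Ob \<and> open N \<and> (\<forall>z\<in>V \<inter> Ob. fst z \<in> N \<and> snd z = h (fst z)) \<and>
     (\<forall>u\<in>N. (u, h u) \<in> V) \<and>
     (\<forall>a b. closed_segment a b \<subseteq> N \<longrightarrow> infnorm (h a - h b) \<le> real CARD('p) * \<eta> * infnorm (a - b))"
proof -
  obtain U W and \<phi> :: "real ^ 'p \<Rightarrow> (real ^ 'p) \<times> (real ^ 'q)" and \<psi> \<phi>' where
    oU: "open U" and yU: "y \<in> U" and oW: "open W" and
    d\<phi>: "\<And>w. w\<in>W \<Longrightarrow> (\<phi> has_derivative blinfun_apply (\<phi>' w)) (at w)" and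
    c\<phi>': "continuous_on W \<phi>'" and inj\<phi>': "\<And>w. w\<in>W \<Longrightarrow> inj (blinfun_apply (\<phi>' w))" and
    hom: "homeomorphism W (V \<inter> U) \<phi> \<psi>"
    using man yV unfolding c1_submanifold_def by meson
  have \<phi>W: "\<phi> ` W = V \<inter> U" and \<psi>VU: "\<psi> ` (V \<inter> U) = W"
    and \<psi>\<phi>: "\<And>w. w \<in> W \<Longrightarrow> \<psi> (\<phi> w) = w" and \<phi>\<psi>: "\<And>z. z \<in> V \<inter> U \<Longrightarrow> \<phi> (\<psi> z) = z"
    using hom unfolding homeomorphism_def by auto
  have tang: "\<exists>L :: real ^ 'p ^ 'q. (\<forall>i j. \<bar>L $ i $ j\<bar> \<le> \<eta>) \<and> \<phi>' w v = (fst (\<phi>' w v), L *v fst (\<phi>' w v))"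
    if wW: "w \<in> W" for w v
  proof -
    obtain L :: "real ^ 'p ^ 'q" where L: "\<forall>i j. \<bar>L $ i $ j\<bar> \<le> \<eta>"
      and T: "tangent_space V (\<phi> w) = {(u, L *v u) | u. True}"
      using eb \<phi>W wW unfolding eta_bounded_def by blast
    obtain \<delta>0 where \<delta>0: "\<delta>0 > 0" "ball w \<delta>0 \<subseteq> W" using oW wW open_contains_ball by blast
    define \<delta> where "\<delta> = \<delta>0 / (norm v + 1)"
    have \<delta>pos: "\<delta> > 0" using \<delta>0 norm_ge_zero[of v] unfolding \<delta>_def by (intro divide_pos_pos) linarith+
    have inW: "w + t *\<^sub>R v \<in> W" if "t \<in> {-\<delta><..<\<delta>}" for t
    proof -
      have "norm (t *\<^sub>R v) = \<bar>t\<bar> * norm v" by simp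
      also have "\<dots> \<le> \<delta> * norm v" using that by (intro mult_right_mono) auto
      also have "\<dots> < \<delta>0"
      proof -
        have np: "0 < norm v + 1" by (simp add: add_nonneg_pos)
        have "\<delta> * norm v = \<delta>0 * norm v / (norm v + 1)" by (simp add: \<delta>_def)
        also have "\<dots> < \<delta>0" using \<delta>0 np by (simp add: pos_divide_less_eq)
        finally show ?thesis .
      qed
      finally show ?thesis using \<delta>0 by (auto simp: dist_norm)
    qed
    have "(\<lambda>t. \<phi> (w + t *\<^sub>R v)) ` {-\<delta><..<\<delta>} \<subseteq> V"
      using inW \<phi>W by blast
    moreover have "((\<lambda>t. \<phi> (w + t *\<^sub>R v)) has_vector_derivative \<phi>' w v) (at 0)"
    proof -
      have dl: "((\<lambda>t::real. w + t *\<^sub>R v) has_derivative (\<lambda>t. t *\<^sub>R v)) (at 0)"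
        by (auto intro!: derivative_eq_intros)
      have "((\<lambda>t. \<phi> (w + t *\<^sub>R v)) has_derivative (\<lambda>t. \<phi>' w (t *\<^sub>R v))) (at 0)"
        using has_derivative_compose[OF dl] d\<phi>[OF wW] by simp
      then show ?thesis unfolding has_vector_derivative_def by (simp add: blinfun.scaleR_right)
    qed
    ultimately have "\<phi>' w v \<in> tangent_space V (\<phi> w)"
      unfolding tangent_space_def using \<delta>pos by (intro CollectI exI[of _ "\<lambda>t. \<phi> (w + t *\<^sub>R v)"] exI[of _ \<delta>]) simp
    with T L show ?thesis by (intro exI[of _ L]) auto
  qed
  define w0 where "w0 = \<psi> y"
  have w0W: "w0 \<in> W" using \<psi>VU yV yU w0_def by blast
  have \<phi>w0: "\<phi> w0 = y" using \<phi>\<psi> yV yU w0_def by blast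
  define f where "f = (\<lambda>w. fst (\<phi> w))"
  define F' where "F' = (\<lambda>w. fst_blinfun o\<^sub>L \<phi>' w)"
  have dF: "(f has_derivative blinfun_apply (F' w)) (at w)" if "w \<in> W" for w
  proof -
    have "blinfun_apply (fst_blinfun o\<^sub>L \<phi>' w) = (\<lambda>x. fst (\<phi>' w x))" by (rule ext) simp
    then show ?thesis unfolding f_def F'_def using has_derivative_fst[OF d\<phi>[OF that]] by simp
  qed
  have cF': "continuous_on W F'"
    unfolding F'_def by (intro continuous_intros c\<phi>')
  have injF: "inj (blinfun_apply (F' w))" if wW: "w \<in> W" for w
  proof (rule injI)
    fix a b assume "blinfun_apply (F' w) a = blinfun_apply (F' w) b"
    then have f0: "fst (\<phi>' w (a - b)) = 0" by (simp add: F'_def blinfun.diff_right)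
    obtain L :: "real ^ 'p ^ 'q" where "\<phi>' w (a - b) = (fst (\<phi>' w (a - b)), L *v fst (\<phi>' w (a - b)))"
      using tang[OF wW] by blast
    then have "\<phi>' w (a - b) = 0" using f0 by (simp add: zero_prod_def)
    then have "\<phi>' w a = \<phi>' w b" by (simp add: blinfun.diff_right)
    then show "a = b" by (rule injD[OF inj\<phi>'[OF wW]])
  qed
  obtain g where lg: "linear g" and gF: "g \<circ> blinfun_apply (F' w0) = id"
    using linear_injective_left_inverse[OF bounded_linear.linear[OF blinfun.bounded_linear_right] injF[OF w0W]] by blast
  define invf where "invf = Blinfun g"
  have "bounded_linear g" using lg linear_conv_bounded_linear by blast
  then have invf_apply: "blinfun_apply invf = g" unfolding invf_def by (simp add: bounded_linear_Blinfun_apply)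
  have invf: "invf o\<^sub>L F' w0 = id_blinfun"
    by (rule blinfun_eqI) (use gF in \<open>simp add: invf_apply pointfree_idE\<close>)
  obtain U' V' k k' where oU': "open U'" and U'W: "U' \<subseteq> W" and w0U': "w0 \<in> U'"
    and oV': "open V'" and hom2: "homeomorphism U' V' f k"
    and dk: "\<And>u. u \<in> V' \<Longrightarrow> (k has_derivative k' u) (at u)"
    and k'eq: "\<And>u. u \<in> V' \<Longrightarrow> k' u = inv (blinfun_apply (F' (k u)))"
    and bijF: "\<And>u. u \<in> V' \<Longrightarrow> bij (blinfun_apply (F' (k u)))"
    using inverse_function_theorem[OF oW dF cF' w0W invf] by metis
  have fU': "f ` U' = V'" and kV': "k ` V' = U'" and kf: "\<And>w. w \<in> U' \<Longrightarrow> k (f w) = w"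
    and fk: "\<And>u. u \<in> V' \<Longrightarrow> f (k u) = u"
    using hom2 unfolding homeomorphism_def by auto
  define h where "h = (\<lambda>u. snd (\<phi> (k u)))"
  have "openin (top_of_set (V \<inter> U)) (\<phi> ` U')"
    by (rule homeomorphism_imp_open_map[OF hom]) (rule open_subset[OF U'W oU'])
  then obtain O1 where oO1: "open O1" and O1: "\<phi> ` U' = V \<inter> U \<inter> O1"
    unfolding openin_open by blast
  define Ob where "Ob = U \<inter> O1"
  have "open Ob" using oU oO1 Ob_def by auto
  moreover have "y \<in> Ob" using O1 w0U' \<phi>w0 Ob_def yU by blast
  moreover have "\<forall>z\<in>V \<inter> Ob. fst z \<in> V' \<and> snd z = h (fst z)"
  proof
    fix z assume "z \<in> V \<inter> Ob"
    then have "z \<in> \<phi> ` U'" using O1 Ob_def by auto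
    then obtain w where wU': "w \<in> U'" and zw: "z = \<phi> w" by blast
    have "fst z = f w" using zw f_def by simp
    then show "fst z \<in> V' \<and> snd z = h (fst z)"
      using fU' wU' kf zw h_def by auto
  qed
  moreover have inV: "\<forall>u\<in>V'. (u, h u) \<in> V"
  proof
    fix u assume uV': "u \<in> V'"
    then have "k u \<in> W" using kV' U'W by blast
    then have "\<phi> (k u) \<in> V" using \<phi>W by blast
    moreover have "fst (\<phi> (k u)) = u" using fk[OF uV'] f_def by simp
    ultimately show "(u, h u) \<in> V" unfolding h_def by (metis prod.collapse)
  qed
  moreover have "\<forall>a b. closed_segment a b \<subseteq> V' \<longrightarrow> infnorm (h a - h b) \<le> real CARD('p) * \<eta> * infnorm (a - b)"
  proof (intro allI impI)
    fix a b assume seg: "closed_segment a b \<subseteq> V'"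
    show "infnorm (h a - h b) \<le> real CARD('p) * \<eta> * infnorm (a - b)"
    proof (rule lip_from_deriv[OF _ _ seg])
      fix u assume uV': "u \<in> V'"
      have kW: "k u \<in> W" using uV' kV' U'W by blast
      show "(h has_derivative (\<lambda>e. snd (\<phi>' (k u) (k' u e)))) (at u)"
        unfolding h_def
        using has_derivative_snd[OF has_derivative_compose[OF dk[OF uV'] d\<phi>[OF kW]]] .
    next
      fix u e assume uV': "u \<in> V'"
      have kW: "k u \<in> W" using uV' kV' U'W by blast
      obtain L :: "real ^ 'p ^ 'q" where L: "\<forall>i j. \<bar>L $ i $ j\<bar> \<le> \<eta>"
        and eq: "\<phi>' (k u) (k' u e) = (fst (\<phi>' (k u) (k' u e)), L *v fst (\<phi>' (k u) (k' u e)))"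
        using tang[OF kW] by blast
      have "fst (\<phi>' (k u) (k' u e)) = blinfun_apply (F' (k u)) (k' u e)"
        by (simp add: F'_def)
      also have "\<dots> = e" using k'eq[OF uV'] bijF[OF uV'] by (simp add: bij_is_surj surj_f_inv_f)
      finally have "snd (\<phi>' (k u) (k' u e)) = L *v e" using eq by (metis snd_conv)
      then show "infnorm (snd (\<phi>' (k u) (k' u e))) \<le> real CARD('p) * \<eta> * infnorm e"
        using matvec_infnorm_bound[of L \<eta> e] L by simp
    qed
  qed
  ultimately show ?thesis using oV' by blast
qed

lemma infnorm_le_iff_cart:
  fixes x :: "real ^ 'n"
  shows "infnorm x \<le> r \<longleftrightarrow> (\<forall>i. \<bar>x $ i\<bar> \<le> r)"
  using infnorm_le_cart[of x r] component_le_infnorm_cart[of x] order_trans by blast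

lemma infnorm_lt_iff_cart:
  fixes x :: "real ^ 'n"
  shows "infnorm x < r \<longleftrightarrow> (\<forall>i. \<bar>x $ i\<bar> < r)"
proof
  assume "infnorm x < r" then show "\<forall>i. \<bar>x $ i\<bar> < r"
    using component_le_infnorm_cart[of x] le_less_trans by blast
next
  assume a: "\<forall>i. \<bar>x $ i\<bar> < r"
  have eq: "{\<bar>x $ i\<bar> |i. i \<in> UNIV} = range (\<lambda>i. \<bar>x $ i\<bar>)" by auto
  have "infnorm x = Max (range (\<lambda>i. \<bar>x $ i\<bar>))"
    unfolding infnorm_cart eq by (rule cSup_eq_Max) auto
  also have "\<dots> < r" using a by (subst Max_less_iff) auto
  finally show "infnorm x < r" .
qed

lemma sball_box: "sball c r = box (c - (\<chi> i. r)) (c + (\<chi> i. r))"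
  unfolding sball_def by (auto simp: mem_box_cart infnorm_lt_iff_cart abs_less_iff algebra_simps)

lemma open_sball: "open (sball c r)" unfolding sball_box by (rule open_box)
lemma convex_sball: "convex (sball c r)" unfolding sball_box by (rule convex_box)

lemma dist_pair_bound:
  fixes a a' :: "real ^ 'p" and b b' :: "real ^ 'q"
  shows "dist (a, b) (a', b') \<le> sqrt CARD('p) * infnorm (a - a') + sqrt CARD('q) * infnorm (b - b')"
proof -
  have "dist (a, b) (a', b') \<le> dist a a' + dist b b'"
    unfolding dist_Pair_Pair using sqrt_sum_squares_le_sum_abs[of "dist a a'" "dist b b'"] by simp
  also have "\<dots> \<le> sqrt CARD('p) * infnorm (a - a') + sqrt CARD('q) * infnorm (b - b')"
    using norm_le_infnorm[of "a - a'"] norm_le_infnorm[of "b - b'"] by (simp add: dist_norm)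
  finally show ?thesis .
qed

lemma ball_fst_sub:
  fixes y :: "'a::metric_space \<times> 'b::metric_space"
  assumes "ball y e \<subseteq> G" shows "ball (fst y) e \<subseteq> fst ` G"
proof
  fix u assume "u \<in> ball (fst y) e"
  moreover have "dist y (u, snd y) = dist (fst y) u" by (cases y) (simp add: dist_Pair_Pair)
  ultimately have "(u, snd y) \<in> ball y e" by simp
  then show "u \<in> fst ` G" using assms by force
qed

lemma chain_lip:
  fixes f :: "real \<Rightarrow> real ^ 'q"
  assumes "\<delta> > 0" "M \<ge> 0"
    and loc: "\<And>s t. s \<in> {0..1} \<Longrightarrow> t \<in> {0..1} \<Longrightarrow> \<bar>s - t\<bar> < \<delta> \<Longrightarrow> infnorm (f s - f t) \<le> M * \<bar>s - t\<bar>"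
  shows "infnorm (f 1 - f 0) \<le> M"
proof -
  have *: "\<forall>t\<in>{0..1}. t \<le> real k * (\<delta>/2) \<longrightarrow> infnorm (f t - f 0) \<le> M * t" for k
  proof (induction k)
    case 0 then show ?case by (auto simp: infnorm_0)
  next
    case (Suc k)
    show ?case
    proof (intro ballI impI)
      fix t :: real assume t: "t \<in> {0..1}" "t \<le> real (Suc k) * (\<delta>/2)"
      show "infnorm (f t - f 0) \<le> M * t"
      proof (cases "t \<le> real k * (\<delta>/2)")
        case True then show ?thesis using Suc t by blast
      next
        case False
        define s where "s = real k * (\<delta>/2)"
        have s: "s \<in> {0..1}" "s < t" using False t \<open>\<delta> > 0\<close> by (auto simp: s_def)
        have "t - s \<le> \<delta>/2" using t by (simp add: s_def algebra_simps)
        then have ts: "\<bar>t - s\<bar> < \<delta>" using s \<open>\<delta> > 0\<close> by auto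
        have "infnorm (f t - f 0) \<le> infnorm (f t - f s) + infnorm (f s - f 0)"
          using infnorm_triangle[of "f t - f s" "f s - f 0"] by simp
        also have "\<dots> \<le> M * \<bar>t - s\<bar> + M * s"
        proof (rule add_mono)
          show "infnorm (f t - f s) \<le> M * \<bar>t - s\<bar>" using loc[OF t(1) s(1) ts] .
          show "infnorm (f s - f 0) \<le> M * s" using Suc s unfolding s_def by blast
        qed
        also have "\<dots> = M * t" using s by (simp add: algebra_simps)
        finally show ?thesis .
      qed
    qed
  qed
  obtain k where "2 / \<delta> \<le> real k" using real_arch_simple by blast
  then have "1 \<le> real k * (\<delta>/2)" using \<open>\<delta> > 0\<close> by (simp add: field_simps)
  with *[of k] show ?thesis by (metis atLeastAtMost_iff order_refl zero_le_one mult_1_right)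
qed

locale setting =
  fixes V :: "((real ^ 'p) \<times> (real ^ 'q)) set" and c :: "real ^ 'p" and d :: "real ^ 'q"
    and \<eta> \<epsilon> Rk :: real
  assumes Rk_def: "Rk = real CARD('p) * \<eta>" and eta_pos: "\<eta> > 0" and man: "c1_submanifold V" and eb: "eta_bounded \<eta> V"
    and xV: "(c, d) \<in> V" and eps: "\<epsilon> > 0"
    and fr: "(sball c \<epsilon> \<times> sball d (Rk * \<epsilon>)) \<inter> frontier_set V = {}"
begin


lemma Rk_pos: "Rk > 0" using eta_pos Rk_def by simp

definition chart :: "((real ^ 'p) \<times> (real ^ 'q)) set \<Rightarrow> (real ^ 'p \<Rightarrow> real ^ 'q) \<Rightarrow> bool" where
  "chart G h \<longleftrightarrow> open G \<and> (\<forall>z\<in>V \<inter> G. snd z = h (fst z)) \<and> (\<forall>u\<in>fst ` G. (u, h u) \<in> V) \<and>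
     (\<forall>a b. closed_segment a b \<subseteq> fst ` G \<longrightarrow> infnorm (h a - h b) \<le> Rk * infnorm (a - b))"

lemma chart_exists:
  assumes "y \<in> V" shows "\<exists>G h. chart G h \<and> y \<in> G"
proof -
  obtain Ob N h where H: "open Ob \<and> y \<in> Ob \<and> open N \<and> (\<forall>z\<in>V \<inter> Ob. fst z \<in> N \<and> snd z = h (fst z)) \<and>
     (\<forall>u\<in>N. (u, h u) \<in> V) \<and>
     (\<forall>a b. closed_segment a b \<subseteq> N \<longrightarrow> infnorm (h a - h b) \<le> real CARD('p) * \<eta> * infnorm (a - b))"
    using local_graph[OF man eb assms] by (elim exE) (erule that)
  have oO: "open Ob" and yO: "y \<in> Ob" and oN: "open N"
    and gr: "\<forall>z\<in>V \<inter> Ob. fst z \<in> N \<and> snd z = h (fst z)" and inV: "\<forall>u\<in>N. (u, h u) \<in> V"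
    and lip: "\<forall>a b. closed_segment a b \<subseteq> N \<longrightarrow> infnorm (h a - h b) \<le> Rk * infnorm (a - b)"
    using H Rk_def by auto
  define G where "G = Ob \<inter> (N \<times> UNIV)"
  have fG: "fst ` G \<subseteq> N" unfolding G_def by auto
  have "chart G h"
    unfolding chart_def
  proof (intro conjI)
    show "open G" unfolding G_def using oO oN by (intro open_Int open_Times) auto
    show "\<forall>z\<in>V \<inter> G. snd z = h (fst z)" using gr G_def by auto
    show "\<forall>u\<in>fst ` G. (u, h u) \<in> V" using inV fG by blast
    show "\<forall>a b. closed_segment a b \<subseteq> fst ` G \<longrightarrow> infnorm (h a - h b) \<le> Rk * infnorm (a - b)"
    proof (intro allI impI)
      fix a b assume "closed_segment a b \<subseteq> fst ` G"
      then have "closed_segment a b \<subseteq> N" using fG by (rule order_trans)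
      then show "infnorm (h a - h b) \<le> Rk * infnorm (a - b)" using lip by blast
    qed
  qed
  moreover have "y \<in> G"
  proof -
    have "fst y \<in> N" using gr yO assms by blast
    then show ?thesis using yO unfolding G_def by (simp add: mem_Times_iff)
  qed
  ultimately show ?thesis by blast
qed

definition K :: "real \<Rightarrow> ((real ^ 'p) \<times> (real ^ 'q)) set" where
  "K r = V \<inter> ({u. infnorm (u - c) \<le> r} \<times> {v. infnorm (v - d) \<le> Rk * r})"

lemma infnorm_cball_cbox:
  fixes a :: "real ^ 'n"
  shows "{u. infnorm (u - a) \<le> r} = cbox (a - (\<chi> i. r)) (a + (\<chi> i. r))"
  by (auto simp: mem_box_cart infnorm_le_iff_cart abs_le_iff algebra_simps)

lemma K_compact:
  assumes "r < \<epsilon>" shows "compact (K r)"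
proof -
  let ?Q = "{u. infnorm (u - c) \<le> r} \<times> {v. infnorm (v - d) \<le> Rk * r}"
  have cQ: "compact ?Q" unfolding infnorm_cball_cbox by (intro compact_Times compact_cbox)
  have QB: "?Q \<subseteq> sball c \<epsilon> \<times> sball d (Rk * \<epsilon>)"
  proof
    fix z assume "z \<in> ?Q"
    then have z1: "infnorm (fst z - c) \<le> r" and z2: "infnorm (snd z - d) \<le> Rk * r" by auto
    have "Rk * r < Rk * \<epsilon>" using assms Rk_pos by simp
    then have "fst z \<in> sball c \<epsilon>" "snd z \<in> sball d (Rk * \<epsilon>)"
      using z1 z2 assms unfolding sball_def by auto
    then show "z \<in> sball c \<epsilon> \<times> sball d (Rk * \<epsilon>)" by (simp add: mem_Times_iff)
  qed
  have "K r = closure V \<inter> ?Q"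
  proof
    show "K r \<subseteq> closure V \<inter> ?Q" unfolding K_def using closure_subset by blast
    show "closure V \<inter> ?Q \<subseteq> K r"
    proof
      fix z assume z: "z \<in> closure V \<inter> ?Q"
      then have "z \<in> sball c \<epsilon> \<times> sball d (Rk * \<epsilon>)" using QB by blast
      then have "z \<notin> frontier_set V" using fr by blast
      then have "z \<in> V" using z unfolding frontier_set_def by blast
      then show "z \<in> K r" using z unfolding K_def by blast
    qed
  qed
  then show ?thesis using cQ by (simp add: closed_Int_compact)
qed

lemma uniform_charts:
  assumes "r < \<epsilon>"
  obtains e where "e > 0" "\<And>y. y \<in> K r \<Longrightarrow> \<exists>G h. chart G h \<and> ball y e \<subseteq> G"
proof -
  let ?G = "{G. \<exists>h. chart G h}"
  have cov: "K r \<subseteq> \<Union>?G"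
  proof
    fix y assume "y \<in> K r"
    then have "y \<in> V" unfolding K_def by blast
    then obtain G h where "chart G h" "y \<in> G" using chart_exists by blast
    then show "y \<in> \<Union>?G" by blast
  qed
  have opn: "\<And>G. G \<in> ?G \<Longrightarrow> open G" unfolding chart_def by blast
  obtain e where e: "e > 0" "\<And>y. y \<in> K r \<Longrightarrow> \<exists>G \<in> ?G. ball y e \<subseteq> G"
    using Heine_Borel_lemma[OF K_compact[OF assms] cov opn] by blast
  show ?thesis
  proof (rule that[OF e(1)])
    fix y assume "y \<in> K r"
    then obtain G where "G \<in> ?G" "ball y e \<subseteq> G" using e(2) by blast
    then show "\<exists>G h. chart G h \<and> ball y e \<subseteq> G" by blast
  qed
qed

definition glift :: "real ^ 'p \<Rightarrow> (real \<Rightarrow> real ^ 'q) \<Rightarrow> bool" where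
  "glift u \<gamma> \<longleftrightarrow> \<gamma> 0 = d \<and> (\<forall>t\<in>{0..1}. (c + t *\<^sub>R (u - c), \<gamma> t) \<in> V) \<and>
     (\<forall>t1\<in>{0..1}. \<forall>t2\<in>{0..1}. infnorm (\<gamma> t1 - \<gamma> t2) \<le> Rk * infnorm (u - c) * \<bar>t1 - t2\<bar>)"

lemma line_diff: "(c + t1 *\<^sub>R (u - c)) - (c + t2 *\<^sub>R (u - c)) = (t1 - t2) *\<^sub>R (u - c)"
  by (simp add: algebra_simps)

lemma infnorm_line_diff: "infnorm ((c + t1 *\<^sub>R (u - c)) - (c + t2 *\<^sub>R (u - c))) = \<bar>t1 - t2\<bar> * infnorm (u - c)"
  unfolding line_diff infnorm_mul ..

end

context setting begin

lemma dist_line: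
  "dist (c + s *\<^sub>R (u - c)) (c + t *\<^sub>R (u - c)) \<le> sqrt CARD('p) * (\<bar>s - t\<bar> * infnorm (u - c))"
proof -
  have "dist (c + s *\<^sub>R (u - c)) (c + t *\<^sub>R (u - c)) = norm ((c + s *\<^sub>R (u - c)) - (c + t *\<^sub>R (u - c)))"
    by (simp add: dist_norm)
  also have "\<dots> \<le> sqrt DIM(real ^ 'p) * infnorm ((c + s *\<^sub>R (u - c)) - (c + t *\<^sub>R (u - c)))"
    by (rule norm_le_infnorm)
  also have "\<dots> = sqrt CARD('p) * (\<bar>s - t\<bar> * infnorm (u - c))"
    unfolding infnorm_line_diff by simp
  finally show ?thesis .
qed

lemma seg_ball: fixes z :: "'a::real_normed_vector" shows "a \<in> ball z e \<Longrightarrow> b \<in> ball z e \<Longrightarrow> closed_segment a b \<subseteq> ball z e"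
  by (rule closed_segment_subset) (auto simp: convex_ball)

lemma lift_exists:
  assumes "infnorm (u - c) < \<epsilon>"
  shows "\<exists>\<gamma>. glift u \<gamma>"
proof -
  define r where "r = infnorm (u - c)"
  have r0: "0 \<le> r" unfolding r_def by (rule infnorm_pos_le)
  have r\<epsilon>: "r < \<epsilon>" using assms r_def by simp
  obtain e where e: "e > 0" and ch: "\<And>y. y \<in> K r \<Longrightarrow> \<exists>G h. chart G h \<and> ball y e \<subseteq> G"
    using uniform_charts[OF r\<epsilon>] by blast
  define M where "M = sqrt CARD('p) * r + sqrt CARD('q) * Rk * r"
  have M0: "M \<ge> 0" unfolding M_def using r0 Rk_pos by simp
  define \<tau> where "\<tau> = e / (M + 1)"
  have \<tau>0: "\<tau> > 0" unfolding \<tau>_def using e M0 by simp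
  have \<tau>M: "\<tau> * M < e"
  proof -
    have "\<tau> * M = e * M / (M + 1)" unfolding \<tau>_def by simp
    also have "\<dots> < e" using e M0 by (simp add: pos_divide_less_eq)
    finally show ?thesis .
  qed
  have spr: "sqrt CARD('p) * r \<le> M" unfolding M_def using r0 Rk_pos by simp
  let ?l = "\<lambda>t. c + t *\<^sub>R (u - c)"
  have step: "\<exists>\<gamma>. \<gamma> 0 = d \<and> (\<forall>t\<in>{0..min 1 (real k * \<tau>)}. (?l t, \<gamma> t) \<in> V) \<and>
      (\<forall>t1\<in>{0..min 1 (real k * \<tau>)}. \<forall>t2\<in>{0..min 1 (real k * \<tau>)}.
         infnorm (\<gamma> t1 - \<gamma> t2) \<le> Rk * r * \<bar>t1 - t2\<bar>)" for k
  proof (induction k)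
    case 0
    have "\<forall>t\<in>{0..min 1 (real 0 * \<tau>)}. (?l t, d) \<in> V" using xV by simp
    then show ?case by (intro exI[of _ "\<lambda>_. d"]) (simp add: infnorm_0)
  next
    case (Suc k)
    obtain \<gamma> where g0: "\<gamma> 0 = d" and gV: "\<forall>t\<in>{0..min 1 (real k * \<tau>)}. (?l t, \<gamma> t) \<in> V"
      and gL: "\<forall>t1\<in>{0..min 1 (real k * \<tau>)}. \<forall>t2\<in>{0..min 1 (real k * \<tau>)}.
         infnorm (\<gamma> t1 - \<gamma> t2) \<le> Rk * r * \<bar>t1 - t2\<bar>"
      using Suc.IH by blast
    define s where "s = min 1 (real k * \<tau>)"
    define s' where "s' = min 1 (real (Suc k) * \<tau>)"
    have ss': "s \<le> s'" unfolding s_def s'_def using \<tau>0 by (auto simp: min_def algebra_simps)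
    have s0: "0 \<le> s" unfolding s_def using \<tau>0 by simp
    have s'1: "s' \<le> 1" unfolding s'_def by simp
    show ?case
    proof (cases "s = 1")
      case True
      then have "s' = 1" using ss' s'1 by simp
      then show ?thesis using g0 gV gL True unfolding s_def s'_def by metis
    next
      case False
      then have sk: "s = real k * \<tau>" unfolding s_def by (auto simp: min_def)
      have s'\<tau>: "s' - s \<le> \<tau>" unfolding s'_def sk by (simp add: algebra_simps min_def)
      define y where "y = (?l s, \<gamma> s)"
      have sI: "s \<in> {0..min 1 (real k * \<tau>)}" using s0 unfolding s_def by simp
      have yV: "y \<in> V" using gV sI y_def by blast
      have yK: "y \<in> K r"
      proof -
        have "infnorm (?l s - c) = s * r" using s0 unfolding r_def by (simp add: infnorm_mul)
        also have "\<dots> \<le> r"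
        proof -
          have "s \<le> 1" using s'1 ss' by simp
          then show ?thesis using r0 by (metis mult_left_le mult.commute)
        qed
        finally have 1: "infnorm (?l s - c) \<le> r" .
        have 0: "0 \<in> {0..min 1 (real k * \<tau>)}" using \<tau>0 by simp
        have "infnorm (\<gamma> s - d) \<le> Rk * r * \<bar>s - 0\<bar>" using gL sI 0 g0 by metis
        also have "\<dots> \<le> Rk * r"
        proof -
          have "s \<le> 1" using s'1 ss' by simp
          moreover have "0 \<le> Rk * r" using Rk_pos r0 by simp
          ultimately show ?thesis using s0 by (simp add: mult_left_le)
        qed
        finally show ?thesis using 1 yV unfolding K_def y_def by auto
      qed
      obtain G h where chG: "chart G h" and bG: "ball y e \<subseteq> G" using ch[OF yK] by blast
      have hb: "ball (fst y) e \<subseteq> fst ` G" by (rule ball_fst_sub[OF bG])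
      have hV: "\<And>v. v \<in> fst ` G \<Longrightarrow> (v, h v) \<in> V" using chG unfolding chart_def by blast
      have hlip: "\<And>a b. closed_segment a b \<subseteq> fst ` G \<Longrightarrow> infnorm (h a - h b) \<le> Rk * infnorm (a - b)"
        using chG unfolding chart_def by blast
      have hs: "\<gamma> s = h (?l s)"
      proof -
        have "y \<in> V \<inter> G" using yV bG e by auto
        moreover have "\<forall>z\<in>V \<inter> G. snd z = h (fst z)" using chG unfolding chart_def by blast
        ultimately have "snd y = h (fst y)" by blast
        then show ?thesis unfolding y_def by simp
      qed
      have lb: "?l t \<in> ball (fst y) e" if "t \<in> {s..s'}" for t
      proof -
        have "dist (?l s) (?l t) \<le> sqrt CARD('p) * (\<bar>s - t\<bar> * r)" unfolding r_def by (rule dist_line)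
        also have "\<dots> \<le> sqrt CARD('p) * (\<tau> * r)"
          using that s'\<tau> r0 by (intro mult_left_mono mult_right_mono) auto
        also have "\<dots> \<le> \<tau> * M" using spr \<tau>0 by (simp add: mult.left_commute mult_left_mono)
        finally show ?thesis using \<tau>M unfolding y_def by simp
      qed
      have hh: "infnorm (h (?l a) - h (?l b)) \<le> Rk * r * \<bar>a - b\<bar>" if "a \<in> {s..s'}" "b \<in> {s..s'}" for a b
      proof -
        have "closed_segment (?l a) (?l b) \<subseteq> fst ` G"
          using seg_ball[OF lb[OF that(1)] lb[OF that(2)]] hb by blast
        then have "infnorm (h (?l a) - h (?l b)) \<le> Rk * infnorm (?l a - ?l b)" by (rule hlip)
        also have "\<dots> = Rk * r * \<bar>a - b\<bar>" unfolding infnorm_line_diff r_def by simp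
        finally show ?thesis .
      qed
      define \<gamma>' where "\<gamma>' = (\<lambda>t. if t \<le> s then \<gamma> t else h (?l t))"
      have s'eq: "{0..min 1 (real (Suc k) * \<tau>)} = {0..s'}" unfolding s'_def ..
      have old: "t \<in> {0..min 1 (real k * \<tau>)}" if "t \<in> {0..s}" for t using that unfolding s_def .
      have L1: "infnorm (\<gamma>' t1 - \<gamma>' t2) \<le> Rk * r * \<bar>t1 - t2\<bar>"
        if t: "t1 \<in> {0..s'}" "t2 \<in> {0..s'}" "t1 \<le> t2" for t1 t2
      proof (cases "t2 \<le> s")
        case True
        then have "t1 \<in> {0..min 1 (real k * \<tau>)}" "t2 \<in> {0..min 1 (real k * \<tau>)}"
          using old[of t1] old[of t2] t by auto
        then have "infnorm (\<gamma> t1 - \<gamma> t2) \<le> Rk * r * \<bar>t1 - t2\<bar>" using gL by blast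
        then show ?thesis using True t unfolding \<gamma>'_def by auto
      next
        case t2s: False
        show ?thesis
        proof (cases "t1 \<le> s")
          case False
          then show ?thesis using hh[of t1 t2] t t2s unfolding \<gamma>'_def by auto
        next
          case True
          have "infnorm (\<gamma>' t1 - \<gamma>' t2) = infnorm ((\<gamma> t1 - \<gamma> s) + (h (?l s) - h (?l t2)))"
            using True t2s hs unfolding \<gamma>'_def by simp
          also have "\<dots> \<le> infnorm (\<gamma> t1 - \<gamma> s) + infnorm (h (?l s) - h (?l t2))"
            by (rule infnorm_triangle)
          also have "\<dots> \<le> Rk * r * \<bar>t1 - s\<bar> + Rk * r * \<bar>s - t2\<bar>"
          proof (rule add_mono)
            show "infnorm (\<gamma> t1 - \<gamma> s) \<le> Rk * r * \<bar>t1 - s\<bar>"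
            proof -
              have "t1 \<in> {0..min 1 (real k * \<tau>)}" "s \<in> {0..min 1 (real k * \<tau>)}"
                using old[of t1] sI t True by auto
              then show ?thesis using gL by blast
            qed
            show "infnorm (h (?l s) - h (?l t2)) \<le> Rk * r * \<bar>s - t2\<bar>"
              using hh[of s t2] t t2s ss' by auto
          qed
          also have "\<dots> = Rk * r * \<bar>t1 - t2\<bar>" using True t2s t by (simp add: algebra_simps)
          finally show ?thesis .
        qed
      qed
      show ?thesis
      proof (intro exI[of _ \<gamma>'] conjI)
        show "\<gamma>' 0 = d" using g0 s0 unfolding \<gamma>'_def by simp
        show "\<forall>t\<in>{0..min 1 (real (Suc k) * \<tau>)}. (?l t, \<gamma>' t) \<in> V"
        proof
          fix t assume "t \<in> {0..min 1 (real (Suc k) * \<tau>)}"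
          then have t: "t \<in> {0..s'}" unfolding s'_def .
          show "(?l t, \<gamma>' t) \<in> V"
          proof (cases "t \<le> s")
            case True then show ?thesis using gV old[of t] t unfolding \<gamma>'_def by auto
          next
            case False
            then have "?l t \<in> fst ` G" using lb[of t] t hb by auto
            then show ?thesis using hV False unfolding \<gamma>'_def by auto
          qed
        qed
        show "\<forall>t1\<in>{0..min 1 (real (Suc k) * \<tau>)}. \<forall>t2\<in>{0..min 1 (real (Suc k) * \<tau>)}.
           infnorm (\<gamma>' t1 - \<gamma>' t2) \<le> Rk * r * \<bar>t1 - t2\<bar>"
        proof (intro ballI)
          fix t1 t2 assume "t1 \<in> {0..min 1 (real (Suc k) * \<tau>)}" "t2 \<in> {0..min 1 (real (Suc k) * \<tau>)}"
          then have t: "t1 \<in> {0..s'}" "t2 \<in> {0..s'}" unfolding s'_def .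
          show "infnorm (\<gamma>' t1 - \<gamma>' t2) \<le> Rk * r * \<bar>t1 - t2\<bar>"
          proof (cases "t1 \<le> t2")
            case True then show ?thesis using L1 t by blast
          next
            case False
            then have "infnorm (\<gamma>' t2 - \<gamma>' t1) \<le> Rk * r * \<bar>t2 - t1\<bar>" using L1 t by auto
            then show ?thesis by (simp add: infnorm_sub abs_minus_commute)
          qed
        qed
      qed
    qed
  qed
  obtain k where k: "1 / \<tau> \<le> real k" using real_arch_simple by blast
  then have "1 \<le> real k * \<tau>" using \<tau>0 by (simp add: field_simps)
  then have mk: "min 1 (real k * \<tau>) = 1" by simp
  obtain \<gamma> where "\<gamma> 0 = d" "\<forall>t\<in>{0..1}. (?l t, \<gamma> t) \<in> V"
     "\<forall>t1\<in>{0..1}. \<forall>t2\<in>{0..1}. infnorm (\<gamma> t1 - \<gamma> t2) \<le> Rk * r * \<bar>t1 - t2\<bar>"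
    using step[of k] unfolding mk by blast
  then have "glift u \<gamma>" unfolding glift_def r_def by blast
  then show ?thesis by blast
qed

end

context setting begin

lemma glift_bound:
  assumes "glift u \<gamma>" "t \<in> {0..1}"
  shows "infnorm (\<gamma> t - d) \<le> Rk * infnorm (u - c) * t"
proof -
  have g: "\<forall>t1\<in>{0..1}. \<forall>t2\<in>{0..1}. infnorm (\<gamma> t1 - \<gamma> t2) \<le> Rk * infnorm (u - c) * \<bar>t1 - t2\<bar>"
    and g0: "\<gamma> 0 = d" using assms(1) unfolding glift_def by blast+
  have "infnorm (\<gamma> t - \<gamma> 0) \<le> Rk * infnorm (u - c) * \<bar>t - 0\<bar>"
    using g[rule_format, OF assms(2), of 0] by simp
  then show ?thesis using assms(2) g0 by simp
qed

lemma glift_K: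
  assumes gl: "glift u \<gamma>" and u: "infnorm (u - c) \<le> r" and t: "t \<in> {0..1}"
  shows "(c + t *\<^sub>R (u - c), \<gamma> t) \<in> K r"
proof -
  have V: "(c + t *\<^sub>R (u - c), \<gamma> t) \<in> V" using gl t unfolding glift_def by blast
  have "infnorm (c + t *\<^sub>R (u - c) - c) = t * infnorm (u - c)" using t by (simp add: infnorm_mul)
  also have "\<dots> \<le> infnorm (u - c)" using t infnorm_pos_le[of "u - c"] by (simp add: mult_left_le_one_le)
  finally have 1: "infnorm (c + t *\<^sub>R (u - c) - c) \<le> r" using u by simp
  have "infnorm (\<gamma> t - d) \<le> Rk * infnorm (u - c) * t" by (rule glift_bound[OF gl t])
  also have "\<dots> \<le> Rk * r * 1"
    using t u Rk_pos infnorm_pos_le[of "u - c"] by (intro mult_mono) auto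
  finally have 2: "infnorm (\<gamma> t - d) \<le> Rk * r" by simp
  show ?thesis using V 1 2 unfolding K_def by auto
qed

lemma lift_compare:
  assumes r0: "0 \<le> r" and e: "e > 0" and ch: "\<And>y. y \<in> K r \<Longrightarrow> \<exists>G h. chart G h \<and> ball y e \<subseteq> G"
    and u: "infnorm (u - c) \<le> r" and u': "infnorm (u' - c) \<le> r"
    and gl: "glift u \<gamma>" and gl': "glift u' \<gamma>'"
    and close: "(sqrt CARD('p) + sqrt CARD('q) * Rk) * infnorm (u - u') < e / 2"
    and t: "t \<in> {0..1}"
  shows "infnorm (\<gamma> t - \<gamma>' t) \<le> Rk * t * infnorm (u - u')"
proof -
  define \<rho> where "\<rho> = infnorm (u - u')"
  have \<rho>0: "0 \<le> \<rho>" unfolding \<rho>_def by (rule infnorm_pos_le)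
  define SP where "SP = sqrt CARD('p)"
  define SQ where "SQ = sqrt CARD('q)"
  have SP0: "SP \<ge> 0" and SQ0: "SQ \<ge> 0" unfolding SP_def SQ_def by auto
  define M where "M = SP * r + SQ * Rk * r"
  have M0: "M \<ge> 0" unfolding M_def using r0 Rk_pos SP0 SQ0 by simp
  define \<tau> where "\<tau> = e / (2 * (M + 1))"
  have \<tau>0: "\<tau> > 0" unfolding \<tau>_def using e M0 by simp
  have \<tau>M: "\<tau> * M < e / 2"
  proof -
    have "\<tau> * M = (e / 2) * M / (M + 1)" unfolding \<tau>_def by simp
    also have "\<dots> < e / 2" using e M0 by (simp add: pos_divide_less_eq)
    finally show ?thesis .
  qed
  let ?l = "\<lambda>t. c + t *\<^sub>R (u - c)"
  let ?l' = "\<lambda>t. c + t *\<^sub>R (u' - c)"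
  have g0: "\<gamma> 0 = d" "\<gamma>' 0 = d" using gl gl' unfolding glift_def by auto
  have gV: "\<And>t. t \<in> {0..1} \<Longrightarrow> (?l t, \<gamma> t) \<in> V" "\<And>t. t \<in> {0..1} \<Longrightarrow> (?l' t, \<gamma>' t) \<in> V"
    using gl gl' unfolding glift_def by auto
  have gL: "\<And>t1 t2. t1 \<in> {0..1} \<Longrightarrow> t2 \<in> {0..1} \<Longrightarrow> infnorm (\<gamma> t1 - \<gamma> t2) \<le> Rk * r * \<bar>t1 - t2\<bar>"
  proof -
    fix t1 t2 :: real assume "t1 \<in> {0..1}" "t2 \<in> {0..1}"
    then have "infnorm (\<gamma> t1 - \<gamma> t2) \<le> Rk * infnorm (u - c) * \<bar>t1 - t2\<bar>" using gl unfolding glift_def by blast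
    also have "\<dots> \<le> Rk * r * \<bar>t1 - t2\<bar>" using u Rk_pos by (intro mult_right_mono mult_left_mono) auto
    finally show "infnorm (\<gamma> t1 - \<gamma> t2) \<le> Rk * r * \<bar>t1 - t2\<bar>" .
  qed
  have gL': "\<And>t1 t2. t1 \<in> {0..1} \<Longrightarrow> t2 \<in> {0..1} \<Longrightarrow> infnorm (\<gamma>' t1 - \<gamma>' t2) \<le> Rk * r * \<bar>t1 - t2\<bar>"
  proof -
    fix t1 t2 :: real assume "t1 \<in> {0..1}" "t2 \<in> {0..1}"
    then have "infnorm (\<gamma>' t1 - \<gamma>' t2) \<le> Rk * infnorm (u' - c) * \<bar>t1 - t2\<bar>" using gl' unfolding glift_def by blast
    also have "\<dots> \<le> Rk * r * \<bar>t1 - t2\<bar>" using u' Rk_pos by (intro mult_right_mono mult_left_mono) auto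
    finally show "infnorm (\<gamma>' t1 - \<gamma>' t2) \<le> Rk * r * \<bar>t1 - t2\<bar>" .
  qed
  have ll: "infnorm (?l a - ?l b) \<le> r * \<bar>a - b\<bar>" for a b
    unfolding infnorm_line_diff using mult_right_mono[OF u abs_ge_zero[of "a - b"]] by (simp add: mult.commute)
  have ll': "infnorm (?l t - ?l' t) = \<bar>t\<bar> * \<rho>" for t
  proof -
    have "?l t - ?l' t = t *\<^sub>R (u - u')" by (simp add: algebra_simps)
    then show ?thesis unfolding \<rho>_def by (simp add: infnorm_mul)
  qed
  have key: "\<forall>t\<in>{0..1}. t \<le> real k * \<tau> \<longrightarrow> infnorm (\<gamma> t - \<gamma>' t) \<le> Rk * t * \<rho>" for k
  proof (induction k)
    case 0
    show ?case
    proof (intro ballI impI)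
      fix t :: real assume "t \<in> {0..1}" "t \<le> real 0 * \<tau>"
      then have "t = 0" by simp
      then show "infnorm (\<gamma> t - \<gamma>' t) \<le> Rk * t * \<rho>" using g0 by (simp add: infnorm_0)
    qed
  next
    case (Suc k)
    show ?case
    proof (intro ballI impI)
      fix t :: real assume t: "t \<in> {0..1}" and tk: "t \<le> real (Suc k) * \<tau>"
      show "infnorm (\<gamma> t - \<gamma>' t) \<le> Rk * t * \<rho>"
      proof (cases "t \<le> real k * \<tau>")
        case True then show ?thesis using Suc.IH t by blast
      next
        case False
        define s where "s = real k * \<tau>"
        have s: "s \<in> {0..1}" "s < t" using False t \<tau>0 unfolding s_def by auto
        have ts: "t - s \<le> \<tau>" using tk unfolding s_def by (simp add: algebra_simps)
        have IHs: "infnorm (\<gamma> s - \<gamma>' s) \<le> Rk * s * \<rho>" using Suc.IH s unfolding s_def by auto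
        also have "\<dots> \<le> Rk * \<rho>" using s Rk_pos \<rho>0 by (simp add: mult_left_le mult.commute mult.left_commute)
        finally have IHs': "infnorm (\<gamma> s - \<gamma>' s) \<le> Rk * \<rho>" .
        define y where "y = (?l s, \<gamma> s)"
        have yK: "y \<in> K r" unfolding y_def by (rule glift_K[OF gl u s(1)])
        obtain G h where chG: "chart G h" and bG: "ball y e \<subseteq> G" using ch[OF yK] by blast
        have hb: "ball (fst y) e \<subseteq> fst ` G" by (rule ball_fst_sub[OF bG])
        have gr: "\<forall>z\<in>V \<inter> G. snd z = h (fst z)" using chG unfolding chart_def by blast
        have hlip: "\<And>a b. closed_segment a b \<subseteq> fst ` G \<Longrightarrow> infnorm (h a - h b) \<le> Rk * infnorm (a - b)"
          using chG unfolding chart_def by blast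
        have d1: "dist y (?l t, \<gamma> t) < e"
        proof -
          have "dist y (?l t, \<gamma> t) \<le> SP * infnorm (?l s - ?l t) + SQ * infnorm (\<gamma> s - \<gamma> t)"
            unfolding y_def SP_def SQ_def by (rule dist_pair_bound)
          also have "\<dots> \<le> SP * (r * \<tau>) + SQ * (Rk * r * \<tau>)"
          proof (intro add_mono mult_left_mono SP0 SQ0)
            show "infnorm (?l s - ?l t) \<le> r * \<tau>"
              using ll[of s t] s ts r0 by (smt (verit) mult_left_mono)
            show "infnorm (\<gamma> s - \<gamma> t) \<le> Rk * r * \<tau>"
              using gL[OF s(1) t] s ts r0 Rk_pos by (smt (verit) mult_left_mono mult_nonneg_nonneg)
          qed
          also have "\<dots> = \<tau> * M" unfolding M_def by (simp add: algebra_simps)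
          finally show ?thesis using \<tau>M e by simp
        qed
        have d2: "dist y (?l' t, \<gamma>' t) < e"
        proof -
          have "dist y (?l' t, \<gamma>' t) \<le> SP * infnorm (?l s - ?l' t) + SQ * infnorm (\<gamma> s - \<gamma>' t)"
            unfolding y_def SP_def SQ_def by (rule dist_pair_bound)
          also have "\<dots> \<le> SP * (r * \<tau> + \<rho>) + SQ * (Rk * \<rho> + Rk * r * \<tau>)"
          proof (intro add_mono mult_left_mono SP0 SQ0)
            have "infnorm (?l s - ?l' t) \<le> infnorm (?l s - ?l t) + infnorm (?l t - ?l' t)"
              using infnorm_triangle[of "?l s - ?l t" "?l t - ?l' t"] by simp
            also have "\<dots> \<le> r * \<tau> + \<rho>"
            proof (rule add_mono)
              show "infnorm (?l s - ?l t) \<le> r * \<tau>"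
                using ll[of s t] s ts r0 by (smt (verit) mult_left_mono)
              show "infnorm (?l t - ?l' t) \<le> \<rho>" unfolding ll' using t \<rho>0 by (simp add: mult_left_le_one_le)
            qed
            finally show "infnorm (?l s - ?l' t) \<le> r * \<tau> + \<rho>" .
            have "infnorm (\<gamma> s - \<gamma>' t) \<le> infnorm (\<gamma> s - \<gamma>' s) + infnorm (\<gamma>' s - \<gamma>' t)"
              using infnorm_triangle[of "\<gamma> s - \<gamma>' s" "\<gamma>' s - \<gamma>' t"] by simp
            also have "\<dots> \<le> Rk * \<rho> + Rk * r * \<tau>"
            proof (rule add_mono)
              show "infnorm (\<gamma> s - \<gamma>' s) \<le> Rk * \<rho>" by (rule IHs')
              show "infnorm (\<gamma>' s - \<gamma>' t) \<le> Rk * r * \<tau>"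
                using gL'[OF s(1) t] s ts r0 Rk_pos by (smt (verit) mult_left_mono mult_nonneg_nonneg)
            qed
            finally show "infnorm (\<gamma> s - \<gamma>' t) \<le> Rk * \<rho> + Rk * r * \<tau>" .
          qed
          also have "\<dots> = \<tau> * M + (SP + SQ * Rk) * \<rho>" unfolding M_def by (simp add: algebra_simps)
          also have "\<dots> < e / 2 + e / 2"
            using \<tau>M close unfolding \<rho>_def SP_def SQ_def by linarith
          finally show ?thesis by simp
        qed
        have p1: "(?l t, \<gamma> t) \<in> V \<inter> G" using d1 bG gV(1)[OF t] by auto
        have p2: "(?l' t, \<gamma>' t) \<in> V \<inter> G" using d2 bG gV(2)[OF t] by auto
        have "snd (?l t, \<gamma> t) = h (fst (?l t, \<gamma> t))" using gr p1 by blast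
        then have e1: "\<gamma> t = h (?l t)" by simp
        have "snd (?l' t, \<gamma>' t) = h (fst (?l' t, \<gamma>' t))" using gr p2 by blast
        then have e2: "\<gamma>' t = h (?l' t)" by simp
        have b1: "?l t \<in> ball (fst y) e"
          using d1 dist_fst_le[of y "(?l t, \<gamma> t)"] by simp
        have b2: "?l' t \<in> ball (fst y) e"
          using d2 dist_fst_le[of y "(?l' t, \<gamma>' t)"] by simp
        have "closed_segment (?l t) (?l' t) \<subseteq> fst ` G" using seg_ball[OF b1 b2] hb by blast
        then have "infnorm (h (?l t) - h (?l' t)) \<le> Rk * infnorm (?l t - ?l' t)" by (rule hlip)
        also have "\<dots> = Rk * t * \<rho>" unfolding ll' using t by simp
        finally show ?thesis using e1 e2 by simp
      qed
    qed
  qed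
  obtain k where k: "1 / \<tau> \<le> real k" using real_arch_simple by blast
  then have "1 \<le> real k * \<tau>" using \<tau>0 by (simp add: field_simps)
  then show ?thesis using key[of k] t unfolding \<rho>_def by auto
qed

end

context setting begin

definition gf :: "real ^ 'p \<Rightarrow> real ^ 'q" where
  "gf u = (SOME \<gamma>. glift u \<gamma>) 1"

lemma gf_glift: "u \<in> sball c \<epsilon> \<Longrightarrow> glift u (SOME \<gamma>. glift u \<gamma>)"
  using lift_exists[of u] someI_ex[of "glift u"] unfolding sball_def by blast

lemma gf_V: "u \<in> sball c \<epsilon> \<Longrightarrow> (u, gf u) \<in> V"
proof -
  assume "u \<in> sball c \<epsilon>"
  then have "\<forall>t\<in>{0..1}. (c + t *\<^sub>R (u - c), (SOME \<gamma>. glift u \<gamma>) t) \<in> V"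
    using gf_glift[of u] unfolding glift_def by blast
  moreover have "(1::real) \<in> {0..1}" by simp
  ultimately have "(c + 1 *\<^sub>R (u - c), (SOME \<gamma>. glift u \<gamma>) 1) \<in> V" by (rule bspec)
  then show ?thesis unfolding gf_def by simp
qed

lemma gf_bound: "u \<in> sball c \<epsilon> \<Longrightarrow> infnorm (gf u - d) \<le> Rk * infnorm (u - c)"
  using glift_bound[OF gf_glift, of u 1] unfolding gf_def by simp

lemma gf_range: "u \<in> sball c \<epsilon> \<Longrightarrow> gf u \<in> sball d (Rk * \<epsilon>)"
proof -
  assume u: "u \<in> sball c \<epsilon>"
  then have "Rk * infnorm (u - c) < Rk * \<epsilon>" using Rk_pos unfolding sball_def by simp
  then show ?thesis using gf_bound[OF u] unfolding sball_def by simp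
qed

lemma c_in: "c \<in> sball c \<epsilon>" using eps unfolding sball_def by (simp add: infnorm_0)

lemma gf_c: "gf c = d"
proof -
  have "infnorm (gf c - d) \<le> 0" using gf_bound[OF c_in] by (simp add: infnorm_0)
  then have "infnorm (gf c - d) = 0" using infnorm_pos_le[of "gf c - d"] by linarith
  then show ?thesis by (simp add: infnorm_eq_0)
qed

lemma gf_loclip:
  assumes r0: "0 \<le> r" and r\<epsilon>: "r < \<epsilon>"
  obtains \<delta> where "\<delta> > 0" "\<And>u u'. infnorm (u - c) \<le> r \<Longrightarrow> infnorm (u' - c) \<le> r \<Longrightarrow> infnorm (u - u') < \<delta> \<Longrightarrow>
     infnorm (gf u - gf u') \<le> Rk * infnorm (u - u')"
proof -
  obtain e where e: "e > 0" and ch: "\<And>y. y \<in> K r \<Longrightarrow> \<exists>G h. chart G h \<and> ball y e \<subseteq> G"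
    using uniform_charts[OF r\<epsilon>] by blast
  define A where "A = sqrt CARD('p) + sqrt CARD('q) * Rk"
  have A0: "A > 0" unfolding A_def using Rk_pos by (simp add: add_pos_nonneg)
  define \<delta> where "\<delta> = e / (2 * A)"
  have \<delta>0: "\<delta> > 0" unfolding \<delta>_def using e A0 by simp
  show ?thesis
  proof (rule that[OF \<delta>0])
    fix u u' assume u: "infnorm (u - c) \<le> r" and u': "infnorm (u' - c) \<le> r" and uu: "infnorm (u - u') < \<delta>"
    have "A * infnorm (u - u') < A * \<delta>" using uu A0 by simp
    also have "A * \<delta> = e / 2" unfolding \<delta>_def using A0 by simp
    finally have close: "A * infnorm (u - u') < e / 2" .
    have uB: "u \<in> sball c \<epsilon>" "u' \<in> sball c \<epsilon>" using u u' r\<epsilon> unfolding sball_def by auto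
    have "infnorm ((SOME \<gamma>. glift u \<gamma>) 1 - (SOME \<gamma>. glift u' \<gamma>) 1) \<le> Rk * 1 * infnorm (u - u')"
      by (rule lift_compare[OF r0 e ch u u' gf_glift[OF uB(1)] gf_glift[OF uB(2)]])
         (use close A_def in auto)
    then show "infnorm (gf u - gf u') \<le> Rk * infnorm (u - u')" unfolding gf_def by simp
  qed
qed

lemma gf_lip:
  assumes a: "a \<in> sball c \<epsilon>" and b: "b \<in> sball c \<epsilon>"
  shows "infnorm (gf a - gf b) \<le> Rk * infnorm (a - b)"
proof (cases "a = b")
  case True then show ?thesis by (simp add: infnorm_0)
next
  case False
  define r where "r = max (infnorm (a - c)) (infnorm (b - c))"
  have r0: "0 \<le> r" unfolding r_def by (simp add: infnorm_pos_le le_max_iff_disj)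
  have r\<epsilon>: "r < \<epsilon>" using a b unfolding r_def sball_def by simp
  obtain \<delta> where \<delta>0: "\<delta> > 0" and loc: "\<And>u u'. infnorm (u - c) \<le> r \<Longrightarrow> infnorm (u' - c) \<le> r \<Longrightarrow> infnorm (u - u') < \<delta> \<Longrightarrow>
     infnorm (gf u - gf u') \<le> Rk * infnorm (u - u')"
    using gf_loclip[OF r0 r\<epsilon>] by blast
  define D where "D = infnorm (b - a)"
  have D0: "D > 0" unfolding D_def using False by (simp add: infnorm_pos_lt)
  define w where "w = (\<lambda>t::real. a + t *\<^sub>R (b - a))"
  have wr: "infnorm (w t - c) \<le> r" if "t \<in> {0..1}" for t
  proof -
    have "w t - c = (1 - t) *\<^sub>R (a - c) + t *\<^sub>R (b - c)" unfolding w_def by (simp add: algebra_simps)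
    then have "infnorm (w t - c) \<le> infnorm ((1 - t) *\<^sub>R (a - c)) + infnorm (t *\<^sub>R (b - c))"
      using infnorm_triangle by metis
    also have "\<dots> = (1 - t) * infnorm (a - c) + t * infnorm (b - c)" using that by (simp add: infnorm_mul)
    also have "\<dots> \<le> (1 - t) * r + t * r" using that unfolding r_def
      by (intro add_mono mult_left_mono) auto
    also have "\<dots> = r" by (simp add: algebra_simps)
    finally show ?thesis .
  qed
  have wd: "infnorm (w s - w t) = \<bar>s - t\<bar> * D" for s t
  proof -
    have "w s - w t = (s - t) *\<^sub>R (b - a)" unfolding w_def by (simp add: algebra_simps)
    then show ?thesis unfolding D_def by (simp add: infnorm_mul)
  qed
  have "infnorm (gf (w 1) - gf (w 0)) \<le> Rk * D"
  proof (rule chain_lip[of "\<delta> / D"])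
    show "\<delta> / D > 0" using \<delta>0 D0 by simp
    show "Rk * D \<ge> 0" using Rk_pos D0 by simp
    fix s t :: real assume s: "s \<in> {0..1}" and t: "t \<in> {0..1}" and st: "\<bar>s - t\<bar> < \<delta> / D"
    have "infnorm (w s - w t) < \<delta>" unfolding wd using st D0 by (simp add: pos_less_divide_eq)
    then have "infnorm (gf (w s) - gf (w t)) \<le> Rk * infnorm (w s - w t)"
      using loc wr s t by blast
    then show "infnorm (gf (w s) - gf (w t)) \<le> Rk * D * \<bar>s - t\<bar>" unfolding wd by (simp add: algebra_simps)
  qed
  moreover have "w 1 = b" "w 0 = a" unfolding w_def by auto
  ultimately show ?thesis unfolding D_def by (simp add: infnorm_sub)
qed

lemma gf_cont: "continuous_on (sball c \<epsilon>) gf"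
proof -
  have L: "(sqrt CARD('q) * Rk)-lipschitz_on (sball c \<epsilon>) gf"
  proof (rule lipschitz_onI)
    fix a b assume "a \<in> sball c \<epsilon>" "b \<in> sball c \<epsilon>"
    have "dist (gf a) (gf b) \<le> sqrt DIM(real ^ 'q) * infnorm (gf a - gf b)"
      unfolding dist_norm by (rule norm_le_infnorm)
    also have "\<dots> \<le> sqrt CARD('q) * (Rk * infnorm (a - b))"
      using gf_lip[OF \<open>a \<in> _\<close> \<open>b \<in> _\<close>] by (simp add: mult_left_mono)
    also have "\<dots> \<le> sqrt CARD('q) * (Rk * dist a b)"
      using Rk_pos infnorm_le_norm[of "a - b"] by (simp add: dist_norm mult_left_mono)
    finally show "dist (gf a) (gf b) \<le> sqrt CARD('q) * Rk * dist a b" by (simp add: mult.assoc)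
  next
    show "0 \<le> sqrt CARD('q) * Rk" using Rk_pos by simp
  qed
  show ?thesis by (rule lipschitz_on_continuous_on[OF L])
qed

lemma component_eq:
  "connected_component_set (V \<inter> (sball c \<epsilon> \<times> sball d (Rk * \<epsilon>))) (c, d) = {(u, gf u) | u. u \<in> sball c \<epsilon>}"
  (is "?C = ?\<Gamma>")
proof -
  let ?B = "sball c \<epsilon>"
  let ?P = "V \<inter> (?B \<times> sball d (Rk * \<epsilon>))"
  have \<Gamma>eq: "?\<Gamma> = (\<lambda>u. (u, gf u)) ` ?B" by auto
  have \<Gamma>P: "?\<Gamma> \<subseteq> ?P" using gf_V gf_range by auto
  have cP: "continuous_on ?B (\<lambda>u. (u, gf u))" by (intro continuous_on_Pair continuous_on_id gf_cont)
  have conn: "connected ?\<Gamma>" unfolding \<Gamma>eq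
    by (rule connected_continuous_image[OF cP convex_connected[OF convex_sball]])
  have x\<Gamma>: "(c, d) \<in> ?\<Gamma>" using c_in gf_c by force
  have sub1: "?\<Gamma> \<subseteq> ?C" by (rule connected_component_maximal[OF x\<Gamma> conn \<Gamma>P])
  have cl: "closedin (top_of_set ?P) ?\<Gamma>"
  proof -
    have cf: "continuous_on (?B \<times> UNIV) (\<lambda>z. snd z - gf (fst z))"
    proof (intro continuous_on_diff continuous_on_snd continuous_on_id)
      show "continuous_on (?B \<times> UNIV) (\<lambda>z. gf (fst z))"
        by (rule continuous_on_compose2[OF gf_cont continuous_on_fst[OF continuous_on_id]]) auto
    qed
    have "closedin (top_of_set (?B \<times> UNIV)) {z \<in> ?B \<times> UNIV. snd z - gf (fst z) = 0}"
      by (rule continuous_closedin_preimage_constant[OF cf])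
    moreover have "{z \<in> ?B \<times> UNIV. snd z - gf (fst z) = 0} = ?\<Gamma>" by force
    ultimately have "closedin (top_of_set (?B \<times> UNIV)) ?\<Gamma>" by simp
    then show ?thesis by (rule closedin_subset_trans) (use \<Gamma>P in auto)
  qed
  have op: "openin (top_of_set ?P) ?\<Gamma>"
  proof (subst openin_subopen, intro ballI)
    fix z assume "z \<in> ?\<Gamma>"
    then obtain u where u: "u \<in> ?B" and z: "z = (u, gf u)" by blast
    have "z \<in> V" using gf_V[OF u] z by simp
    then obtain G h where chG: "chart G h" and zG: "z \<in> G" using chart_exists by blast
    have oG: "open G" and gr: "\<forall>z\<in>V \<inter> G. snd z = h (fst z)" using chG unfolding chart_def by auto
    define T0 where "T0 = ?B \<inter> (\<lambda>w. (w, gf w)) -` G"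
    have oT0: "open T0" unfolding T0_def by (rule continuous_open_preimage[OF cP open_sball oG])
    define T where "T = ?P \<inter> (G \<inter> (T0 \<times> UNIV))"
    have "openin (top_of_set ?P) T" unfolding T_def using oG oT0 by (intro openin_open_Int open_Int open_Times) auto
    moreover have "z \<in> T" unfolding T_def T0_def using \<Gamma>P \<open>z \<in> ?\<Gamma>\<close> zG u z by auto
    moreover have "T \<subseteq> ?\<Gamma>"
    proof
      fix y assume y: "y \<in> T"
      then have yVG: "y \<in> V \<inter> G" unfolding T_def by auto
      then have 1: "snd y = h (fst y)" using gr by blast
      have fy: "fst y \<in> ?B" "(fst y, gf (fst y)) \<in> G" using y unfolding T_def T0_def by auto
      then have "(fst y, gf (fst y)) \<in> V \<inter> G" using gf_V by auto
      then have "snd (fst y, gf (fst y)) = h (fst (fst y, gf (fst y)))" using gr by blast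
      then have "gf (fst y) = snd y" using 1 by simp
      then show "y \<in> ?\<Gamma>" using fy(1) by (metis (mono_tags, lifting) mem_Collect_eq prod.collapse)
    qed
    ultimately show "\<exists>T. openin (top_of_set ?P) T \<and> z \<in> T \<and> T \<subseteq> ?\<Gamma>" by blast
  qed
  have sub2: "?C \<subseteq> ?\<Gamma>"
  proof -
    have connC: "connected ?C" by (rule connected_connected_component)
    have CP: "?C \<subseteq> ?P" by (rule connected_component_subset)
    have xC: "(c, d) \<in> ?C" using sub1 x\<Gamma> by blast
    obtain O' where oO': "open O'" and O': "?\<Gamma> = ?P \<inter> O'" using op unfolding openin_open by blast
    obtain F' where cF': "closed F'" and F': "?\<Gamma> = ?P \<inter> F'" using cl unfolding closedin_closed by blast
    have e1: "?C \<inter> ?\<Gamma> = ?C \<inter> O'" using O' CP by blast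
    have e2: "?C \<inter> ?\<Gamma> = ?C \<inter> F'" using F' CP by blast
    have "openin (top_of_set ?C) (?C \<inter> ?\<Gamma>)" unfolding e1 using oO' by (rule openin_open_Int)
    moreover have "closedin (top_of_set ?C) (?C \<inter> ?\<Gamma>)" unfolding e2 using cF' by (rule closedin_closed_Int)
    ultimately have "?C \<inter> ?\<Gamma> = {} \<or> ?C \<inter> ?\<Gamma> = ?C" using connC unfolding connected_clopen by blast
    then show ?thesis using xC x\<Gamma> by blast
  qed
  show ?thesis using sub1 sub2 by blast
qed

end

theorem lemma1p5:
  fixes V :: "((real ^ 'p) \<times> (real ^ 'q)) set"
    and x :: "(real ^ 'p) \<times> (real ^ 'q)"
    and \<eta> \<epsilon> :: real
  assumes "\<eta> > 0"
    and "c1_submanifold V"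
    and "eta_bounded \<eta> V"
    and "x \<in> V"
    and "\<epsilon> > 0"
    and "(sball (fst x) \<epsilon> \<times> sball (snd x) (real CARD('p) * \<eta> * \<epsilon>)) \<inter> frontier_set V = {}"
  shows "\<exists>g. g ` sball (fst x) \<epsilon> \<subseteq> sball (snd x) (real CARD('p) * \<eta> * \<epsilon>) \<and>
             sup_lipschitz_on (real CARD('p) * \<eta>) (sball (fst x) \<epsilon>) g \<and>
             connected_component_set (V \<inter> (sball (fst x) \<epsilon> \<times> sball (snd x) (real CARD('p) * \<eta> * \<epsilon>))) x
               = {(u, g u) | u. u \<in> sball (fst x) \<epsilon>}"
proof -
  interpret S: setting V "fst x" "snd x" \<eta> \<epsilon> "real CARD('p) * \<eta>"
    by unfold_locales (use assms in auto)
  show ?thesis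
  proof (intro exI[of _ S.gf] conjI)
    show "S.gf ` sball (fst x) \<epsilon> \<subseteq> sball (snd x) (real CARD('p) * \<eta> * \<epsilon>)"
      using S.gf_range by blast
    show "sup_lipschitz_on (real CARD('p) * \<eta>) (sball (fst x) \<epsilon>) S.gf"
      unfolding sup_lipschitz_on_def using S.gf_lip by blast
    show "connected_component_set (V \<inter> (sball (fst x) \<epsilon> \<times> sball (snd x) (real CARD('p) * \<eta> * \<epsilon>))) x
               = {(u, S.gf u) | u. u \<in> sball (fst x) \<epsilon>}"
      using S.component_eq by simp
  qed
qed

end
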